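(* Let $\Omega\subset\mathbb{R}^n$ ($n\ge2$) be a bounded domain with Lipschitz boundary and $\gamma,\beta,\theta\in M_0(\Omega)$ with $\theta(x)\ge\gamma(x)+\beta(x)+\varepsilon_0$ a.e. for some $\varepsilon_0>0$. Let $u\in S_{1,\gamma(x),\beta(x),\theta(x)}(\Omega)$ and $\lambda_u:=[u]_{S_{\gamma,\beta,\theta}}$. Then $$\max\{\lambda_u^{\gamma^-+\beta^-},\lambda_u^{\theta^+}\}\ge \Re^{\gamma,\beta,\theta}(u)\ge\min\{\lambda_u^{\gamma^-+\beta^-},\lambda_u^{\theta^+}\}.$$
   Context: $M_0(\Omega)$: measurable $p:\Omega\to[1,\infty]$ with $1\le p^-\le p(x)\le p^+<\infty$ a.e. ($p^\pm$ essential sup/inf). $D_i=\partial/\partial x_i$. $\Re^{\gamma,\beta,\theta}(u):=\int_\Omega|u|^{\theta(x)}dx+\sum_{i=1}^n\int_\Omega|u|^{\gamma(x)}|D_iu|^{\beta(x)}dx$, and $S_{1,\gamma(x),\beta(x),\theta(x)}(\Omega)=\{u\in L^1(\Omega):\Re^{\gamma,\beta,\theta}(u)<\infty\}$, with pseudo-norm $$[u]_{S_{\gamma,\beta,\theta}}=\inf\Big\{\lambda>0:\int_\Omega\Big|\frac{u}{\lambda}\Big|^{\theta(x)}dx+\sum_{i=1}^n\int_\Omega\Big|\frac{|u|^{\gamma(x)/\beta(x)}D_iu}{\lambda^{\gamma(x)/\beta(x)+1}}\Big|^{\beta(x)}dx\le1\Big\}.$$ *)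

theory Defs
  imports "HOL-Analysis.Analysis"
begin

definition partial :: "'n::finite \<Rightarrow> (real^'n \<Rightarrow> real) \<Rightarrow> real^'n \<Rightarrow> real" where
  "partial i f x = frechet_derivative f (at x) (axis i 1)"

coinductive smooth_fun :: "(real^'n::finite \<Rightarrow> real) \<Rightarrow> bool" where
  "(\<And>x. f differentiable (at x)) \<Longrightarrow> (\<And>i. smooth_fun (partial i f)) \<Longrightarrow> smooth_fun f"

definition test_fun :: "(real^'n::finite) set \<Rightarrow> (real^'n \<Rightarrow> real) \<Rightarrow> bool" where
  "test_fun \<Omega> \<phi> \<longleftrightarrow> smooth_fun \<phi> \<and> compact (closure {x. \<phi> x \<noteq> 0})
      \<and> closure {x. \<phi> x \<noteq> 0} \<subseteq> \<Omega>"

definition weak_partial :: "(real^'n::finite) set \<Rightarrow> 'n \<Rightarrow> (real^'n \<Rightarrow> real) \<Rightarrow> (real^'n \<Rightarrow> real) \<Rightarrow> bool" where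
  "weak_partial \<Omega> i u g \<longleftrightarrow>
     (\<forall>K. compact K \<and> K \<subseteq> \<Omega> \<longrightarrow> integrable (lebesgue_on K) u \<and> integrable (lebesgue_on K) g) \<and>
     (\<forall>\<phi>. test_fun \<Omega> \<phi> \<longrightarrow>
        (\<integral>x. u x * partial i \<phi> x \<partial>lebesgue_on \<Omega>) = - (\<integral>x. g x * \<phi> x \<partial>lebesgue_on \<Omega>))"

text \<open>Bounded domain with (strong) Lipschitz boundary: near every boundary point, after a rigid
  motion, Omega is the region below the graph of a Lipschitz function of the remaining n-1 coordinates.\<close>
definition lipschitz_domain :: "(real^'n::finite) set \<Rightarrow> bool" where
  "lipschitz_domain \<Omega> \<longleftrightarrow> open \<Omega> \<and> connected \<Omega> \<and> bounded \<Omega> \<and> \<Omega> \<noteq> {} \<and>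
     (\<forall>x0\<in>frontier \<Omega>. \<exists>V T k g L.
        open V \<and> x0 \<in> V \<and> orthogonal_transformation (T :: real^'n \<Rightarrow> real^'n) \<and>
        L-lipschitz_on UNIV g \<and> (\<forall>y. g y = g (y + (0 - y $ k) *\<^sub>R axis k 1)) \<and>
        (\<forall>x\<in>V. x \<in> \<Omega> \<longleftrightarrow> T (x - x0) $ k < g (T (x - x0))))"

definition ess_sup_on :: "(real^'n::finite) set \<Rightarrow> (real^'n \<Rightarrow> real) \<Rightarrow> real" where
  "ess_sup_on \<Omega> p = Inf {c. AE x in lebesgue_on \<Omega>. p x \<le> c}"

definition ess_inf_on :: "(real^'n::finite) set \<Rightarrow> (real^'n \<Rightarrow> real) \<Rightarrow> real" where
  "ess_inf_on \<Omega> p = Sup {c. AE x in lebesgue_on \<Omega>. c \<le> p x}"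

definition M0 :: "(real^'n::finite) set \<Rightarrow> (real^'n \<Rightarrow> real) \<Rightarrow> bool" where
  "M0 \<Omega> p \<longleftrightarrow> p \<in> borel_measurable (lebesgue_on \<Omega>) \<and>
     (\<exists>C. AE x in lebesgue_on \<Omega>. p x \<le> C) \<and>
     (\<exists>c. AE x in lebesgue_on \<Omega>. c \<le> p x) \<and>
     1 \<le> ess_inf_on \<Omega> p \<and>
     (AE x in lebesgue_on \<Omega>. ess_inf_on \<Omega> p \<le> p x \<and> p x \<le> ess_sup_on \<Omega> p)"

definition modular :: "(real^'n::finite) set \<Rightarrow> (real^'n \<Rightarrow> real) \<Rightarrow> (real^'n \<Rightarrow> real) \<Rightarrow> (real^'n \<Rightarrow> real)
    \<Rightarrow> (real^'n \<Rightarrow> real) \<Rightarrow> ('n \<Rightarrow> real^'n \<Rightarrow> real) \<Rightarrow> ennreal" where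
  "modular \<Omega> \<gamma> \<beta> \<theta> u Du =
     (\<integral>\<^sup>+x. ennreal (\<bar>u x\<bar> powr \<theta> x) \<partial>lebesgue_on \<Omega>) +
     (\<Sum>i\<in>UNIV. \<integral>\<^sup>+x. ennreal (\<bar>u x\<bar> powr \<gamma> x * \<bar>Du i x\<bar> powr \<beta> x) \<partial>lebesgue_on \<Omega>)"

definition in_S :: "(real^'n::finite) set \<Rightarrow> (real^'n \<Rightarrow> real) \<Rightarrow> (real^'n \<Rightarrow> real) \<Rightarrow> (real^'n \<Rightarrow> real)
    \<Rightarrow> (real^'n \<Rightarrow> real) \<Rightarrow> ('n \<Rightarrow> real^'n \<Rightarrow> real) \<Rightarrow> bool" where
  "in_S \<Omega> \<gamma> \<beta> \<theta> u Du \<longleftrightarrow> integrable (lebesgue_on \<Omega>) u \<and> (\<forall>i. weak_partial \<Omega> i u (Du i)) \<and>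
     modular \<Omega> \<gamma> \<beta> \<theta> u Du < \<infinity>"

definition S_norm :: "(real^'n::finite) set \<Rightarrow> (real^'n \<Rightarrow> real) \<Rightarrow> (real^'n \<Rightarrow> real) \<Rightarrow> (real^'n \<Rightarrow> real)
    \<Rightarrow> (real^'n \<Rightarrow> real) \<Rightarrow> ('n \<Rightarrow> real^'n \<Rightarrow> real) \<Rightarrow> real" where
  "S_norm \<Omega> \<gamma> \<beta> \<theta> u Du = Inf {s::real. s > 0 \<and>
     (\<integral>\<^sup>+x. ennreal (\<bar>u x / s\<bar> powr \<theta> x) \<partial>lebesgue_on \<Omega>) +
     (\<Sum>i\<in>UNIV. \<integral>\<^sup>+x. ennreal (\<bar>(\<bar>u x\<bar> powr (\<gamma> x / \<beta> x) * Du i x) / s powr (\<gamma> x / \<beta> x + 1)\<bar> powr \<beta> x)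
        \<partial>lebesgue_on \<Omega>) \<le> 1}"

end

theory Submission
  imports Defs
begin


lemma nn_cmult_ge:
  fixes c :: ennreal
  shows "c * integral\<^sup>N M f \<le> (\<integral>\<^sup>+x. c * f x \<partial>M)"
proof -
  have "c * integral\<^sup>N M f = (SUP g \<in> {g. simple_function M g \<and> g \<le> f}. c * integral\<^sup>S M g)"
    unfolding nn_integral_def by (simp add: SUP_mult_left_ennreal)
  also have "\<dots> \<le> (\<integral>\<^sup>+x. c * f x \<partial>M)"
  proof (rule SUP_least)
    fix g assume g: "g \<in> {g. simple_function M g \<and> g \<le> f}"
    then have "c * integral\<^sup>S M g = integral\<^sup>S M (\<lambda>x. c * g x)"
      by (simp add: simple_integral_mult)
    also have "\<dots> = integral\<^sup>N M (\<lambda>x. c * g x)"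
      using g by (intro nn_integral_eq_simple_integral[symmetric]) (auto intro: simple_function_mult)
    also have "\<dots> \<le> (\<integral>\<^sup>+x. c * f x \<partial>M)"
      using g by (intro nn_integral_mono) (auto simp: le_fun_def intro: mult_left_mono)
    finally show "c * integral\<^sup>S M g \<le> (\<integral>\<^sup>+x. c * f x \<partial>M)" .
  qed
  finally show ?thesis .
qed

lemma nn_cmult_eq:
  assumes "r > 0"
  shows "(\<integral>\<^sup>+x. ennreal r * f x \<partial>M) = ennreal r * integral\<^sup>N M f"
proof (rule antisym)
  have "(\<integral>\<^sup>+x. ennreal r * f x \<partial>M) = ennreal r * (ennreal (1/r) * (\<integral>\<^sup>+x. ennreal r * f x \<partial>M))"
    using assms by (simp add: ennreal_mult'[symmetric] mult.assoc[symmetric])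
  also have "\<dots> \<le> ennreal r * (\<integral>\<^sup>+x. ennreal (1/r) * (ennreal r * f x) \<partial>M)"
    by (intro mult_left_mono nn_cmult_ge) auto
  also have "\<dots> = ennreal r * integral\<^sup>N M f"
    using assms by (simp add: ennreal_mult'[symmetric] mult.assoc[symmetric])
  finally show "(\<integral>\<^sup>+x. ennreal r * f x \<partial>M) \<le> ennreal r * integral\<^sup>N M f" .
qed (rule nn_cmult_ge)



lemma powr_between:
  fixes s a b p :: real
  assumes "s > 0" "a \<le> p" "p \<le> b"
  shows "1 / max (s powr a) (s powr b) \<le> s powr (-p)"
    and "s powr (-p) \<le> 1 / min (s powr a) (s powr b)"
proof -
  have e: "s powr (-p) = 1 / s powr p" by (simp add: powr_minus_divide)
  have pos: "s powr a > 0" "s powr b > 0" "s powr p > 0" using assms by auto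
  have "min (s powr a) (s powr b) \<le> s powr p \<and> s powr p \<le> max (s powr a) (s powr b)"
  proof (cases "s \<ge> 1")
    case True
    then have "s powr a \<le> s powr p" "s powr p \<le> s powr b"
      using assms by (auto intro: powr_mono)
    then show ?thesis by auto
  next
    case False
    then have "s powr b \<le> s powr p" "s powr p \<le> s powr a"
      using assms by (auto intro: powr_mono')
    then show ?thesis by auto
  qed
  then show "1 / max (s powr a) (s powr b) \<le> s powr (-p)"
    and "s powr (-p) \<le> 1 / min (s powr a) (s powr b)"
    unfolding e using pos by (auto intro!: divide_left_mono simp: min_def max_def)
qed

lemma ptw1:
  fixes s v p :: real
  assumes "s > 0"
  shows "\<bar>v / s\<bar> powr p = s powr (-p) * \<bar>v\<bar> powr p"
  using assms by (simp add: powr_divide powr_minus_divide abs_divide)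

lemma ptw2:
  fixes s v d g bb :: real
  assumes "s > 0" "bb > 0"
  shows "\<bar>(\<bar>v\<bar> powr (g / bb) * d) / s powr (g / bb + 1)\<bar> powr bb
       = s powr (-(g + bb)) * (\<bar>v\<bar> powr g * \<bar>d\<bar> powr bb)"
proof -
  have "\<bar>(\<bar>v\<bar> powr (g / bb) * d) / s powr (g / bb + 1)\<bar> powr bb
      = (\<bar>v\<bar> powr (g / bb) * \<bar>d\<bar> / s powr (g / bb + 1)) powr bb"
    by (simp add: abs_mult abs_divide)
  also have "\<dots> = (\<bar>v\<bar> powr (g / bb)) powr bb * \<bar>d\<bar> powr bb / (s powr (g / bb + 1)) powr bb"
    by (simp add: powr_divide powr_mult)
  also have "\<dots> = \<bar>v\<bar> powr g * \<bar>d\<bar> powr bb / s powr (g + bb)"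
    using assms by (simp add: powr_powr distrib_right)
  also have "\<dots> = s powr (-(g + bb)) * (\<bar>v\<bar> powr g * \<bar>d\<bar> powr bb)"
    by (simp only: powr_minus_divide) simp
  finally show ?thesis .
qed



theorem lemma3p4:
  fixes \<Omega> :: "(real^'n) set"
    and \<gamma> \<beta> \<theta> u :: "real^'n \<Rightarrow> real"
    and Du :: "'n \<Rightarrow> real^'n \<Rightarrow> real"
  assumes "CARD('n) \<ge> 2"
    and "lipschitz_domain \<Omega>"
    and "M0 \<Omega> \<gamma>" and "M0 \<Omega> \<beta>" and "M0 \<Omega> \<theta>"
    and "\<exists>\<epsilon>0>0. AE x in lebesgue_on \<Omega>. \<theta> x \<ge> \<gamma> x + \<beta> x + \<epsilon>0"
    and "in_S \<Omega> \<gamma> \<beta> \<theta> u Du"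
  shows "ennreal (max (S_norm \<Omega> \<gamma> \<beta> \<theta> u Du powr (ess_inf_on \<Omega> \<gamma> + ess_inf_on \<Omega> \<beta>))
                      (S_norm \<Omega> \<gamma> \<beta> \<theta> u Du powr ess_sup_on \<Omega> \<theta>)) \<ge> modular \<Omega> \<gamma> \<beta> \<theta> u Du
       \<and> modular \<Omega> \<gamma> \<beta> \<theta> u Du \<ge>
         ennreal (min (S_norm \<Omega> \<gamma> \<beta> \<theta> u Du powr (ess_inf_on \<Omega> \<gamma> + ess_inf_on \<Omega> \<beta>))
                      (S_norm \<Omega> \<gamma> \<beta> \<theta> u Du powr ess_sup_on \<Omega> \<theta>))"
  proof -
  define a where "a = ess_inf_on \<Omega> \<gamma> + ess_inf_on \<Omega> \<beta>"
  define b where "b = ess_sup_on \<Omega> \<theta>"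
  define R where "R = modular \<Omega> \<gamma> \<beta> \<theta> u Du"
  define F where "F = (\<lambda>s::real. (\<integral>\<^sup>+x. ennreal (\<bar>u x / s\<bar> powr \<theta> x) \<partial>lebesgue_on \<Omega>) +
     (\<Sum>i\<in>UNIV. \<integral>\<^sup>+x. ennreal (\<bar>(\<bar>u x\<bar> powr (\<gamma> x / \<beta> x) * Du i x) / s powr (\<gamma> x / \<beta> x + 1)\<bar> powr \<beta> x)
        \<partial>lebesgue_on \<Omega>))"
  define S where "S = {s::real. s > 0 \<and> F s \<le> 1}"
  define lam where "lam = S_norm \<Omega> \<gamma> \<beta> \<theta> u Du"
  have lam: "lam = Inf S" unfolding lam_def S_def F_def S_norm_def by simp
  obtain e where e: "e > 0" "AE x in lebesgue_on \<Omega>. \<theta> x \<ge> \<gamma> x + \<beta> x + e"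
    using assms(6) by blast
  have ga: "1 \<le> ess_inf_on \<Omega> \<gamma>" "AE x in lebesgue_on \<Omega>. ess_inf_on \<Omega> \<gamma> \<le> \<gamma> x"
    using assms(3) unfolding M0_def by auto
  have be: "1 \<le> ess_inf_on \<Omega> \<beta>" "AE x in lebesgue_on \<Omega>. ess_inf_on \<Omega> \<beta> \<le> \<beta> x"
    using assms(4) unfolding M0_def by auto
  have th: "AE x in lebesgue_on \<Omega>. \<theta> x \<le> ess_sup_on \<Omega> \<theta>"
    using assms(5) unfolding M0_def by auto
  have a2: "a \<ge> 2" using ga be unfolding a_def by simp
  have AEx: "AE x in lebesgue_on \<Omega>. \<beta> x > 0 \<and> a \<le> \<gamma> x + \<beta> x \<and> \<gamma> x + \<beta> x \<le> b
      \<and> a \<le> \<theta> x \<and> \<theta> x \<le> b"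
    using ga(2) be(2) th e(2) unfolding a_def b_def
  proof eventually_elim
    case (elim x) then show ?case using ga(1) be(1) e(1) by auto
  qed
  have ab: "a \<le> b"
  proof -
    have "\<exists>x. a \<le> \<theta> x \<and> \<theta> x \<le> b"
    proof (rule ccontr)
      assume "\<not> ?thesis"
      then have "AE x in lebesgue_on \<Omega>. False" using AEx by (auto elim: eventually_mono)
      moreover have "emeasure (lebesgue_on \<Omega>) (space (lebesgue_on \<Omega>)) \<noteq> 0"
      proof -
        have o: "open \<Omega>" "\<Omega> \<noteq> {}" using assms(2) unfolding lipschitz_domain_def by auto
        have "\<Omega> \<in> sets lebesgue" using o by auto
        then have "emeasure (lebesgue_on \<Omega>) \<Omega> = emeasure lebesgue \<Omega>"
          by (simp add: emeasure_restrict_space)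
        moreover have "emeasure lebesgue \<Omega> \<noteq> 0"
          using o \<open>\<Omega> \<in> sets lebesgue\<close> open_not_negligible negligible_iff_emeasure0 by blast
        moreover have "space (lebesgue_on \<Omega>) = \<Omega>" by simp
        ultimately show ?thesis by simp
      qed
      ultimately show False using ae_filter_eq_bot_iff trivial_limit_def by metis
    qed
    then show ?thesis by auto
  qed
  have Rfin: "R < \<infinity>" using assms(7) unfolding in_S_def R_def by auto
  have Rdef: "R = (\<integral>\<^sup>+x. ennreal (\<bar>u x\<bar> powr \<theta> x) \<partial>lebesgue_on \<Omega>) +
     (\<Sum>i\<in>UNIV. \<integral>\<^sup>+x. ennreal (\<bar>u x\<bar> powr \<gamma> x * \<bar>Du i x\<bar> powr \<beta> x) \<partial>lebesgue_on \<Omega>)"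
    unfolding R_def modular_def by simp
  have L: "ennreal (1 / max (s powr a) (s powr b)) * R \<le> F s" if s: "s > 0" for s
  proof -
    define c where "c = 1 / max (s powr a) (s powr b)"
    have c: "c > 0" unfolding c_def using s by (auto simp: max_def min_def)
    have "ennreal c * R = (\<integral>\<^sup>+x. ennreal c * ennreal (\<bar>u x\<bar> powr \<theta> x) \<partial>lebesgue_on \<Omega>) +
     (\<Sum>i\<in>UNIV. \<integral>\<^sup>+x. ennreal c * ennreal (\<bar>u x\<bar> powr \<gamma> x * \<bar>Du i x\<bar> powr \<beta> x) \<partial>lebesgue_on \<Omega>)"
      unfolding Rdef using c by (simp add: distrib_left sum_distrib_left nn_cmult_eq)
    also have "\<dots> \<le> F s"
      unfolding F_def
    proof (intro add_mono sum_mono nn_integral_mono_AE)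
      show "AE x in lebesgue_on \<Omega>. ennreal c * ennreal (\<bar>u x\<bar> powr \<theta> x) \<le> ennreal (\<bar>u x / s\<bar> powr \<theta> x)"
        using AEx
      proof eventually_elim
        case (elim x)
        then have "c \<le> s powr (- \<theta> x)" unfolding c_def using s powr_between(1) by blast
        then have "c * \<bar>u x\<bar> powr \<theta> x \<le> \<bar>u x / s\<bar> powr \<theta> x"
          unfolding ptw1[OF s] by (intro mult_right_mono) auto
        then show ?case using c by (simp add: ennreal_mult'[symmetric] ennreal_leI)
      qed
      fix i
      show "AE x in lebesgue_on \<Omega>. ennreal c * ennreal (\<bar>u x\<bar> powr \<gamma> x * \<bar>Du i x\<bar> powr \<beta> x)
        \<le> ennreal (\<bar>(\<bar>u x\<bar> powr (\<gamma> x / \<beta> x) * Du i x) / s powr (\<gamma> x / \<beta> x + 1)\<bar> powr \<beta> x)"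
        using AEx
      proof eventually_elim
        case (elim x)
        then have "c \<le> s powr (- (\<gamma> x + \<beta> x))" unfolding c_def using s powr_between(1) by blast
        then have "c * (\<bar>u x\<bar> powr \<gamma> x * \<bar>Du i x\<bar> powr \<beta> x) \<le>
          \<bar>(\<bar>u x\<bar> powr (\<gamma> x / \<beta> x) * Du i x) / s powr (\<gamma> x / \<beta> x + 1)\<bar> powr \<beta> x"
          unfolding ptw2[OF s conjunct1[OF elim]] by (intro mult_right_mono) auto
        then show ?case using c by (simp add: ennreal_mult'[symmetric] ennreal_leI)
      qed
    qed
    finally show ?thesis unfolding c_def .
  qed
  have U: "F s \<le> ennreal (1 / min (s powr a) (s powr b)) * R" if s: "s > 0" for s
  proof -
    define c where "c = 1 / min (s powr a) (s powr b)"
    have c: "c > 0" unfolding c_def using s by (auto simp: max_def min_def)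
    have "F s \<le> (\<integral>\<^sup>+x. ennreal c * ennreal (\<bar>u x\<bar> powr \<theta> x) \<partial>lebesgue_on \<Omega>) +
     (\<Sum>i\<in>UNIV. \<integral>\<^sup>+x. ennreal c * ennreal (\<bar>u x\<bar> powr \<gamma> x * \<bar>Du i x\<bar> powr \<beta> x) \<partial>lebesgue_on \<Omega>)"
      unfolding F_def
    proof (intro add_mono sum_mono nn_integral_mono_AE)
      show "AE x in lebesgue_on \<Omega>. ennreal (\<bar>u x / s\<bar> powr \<theta> x) \<le> ennreal c * ennreal (\<bar>u x\<bar> powr \<theta> x)"
        using AEx
      proof eventually_elim
        case (elim x)
        then have "s powr (- \<theta> x) \<le> c" unfolding c_def using s powr_between(2) by blast
        then have "\<bar>u x / s\<bar> powr \<theta> x \<le> c * \<bar>u x\<bar> powr \<theta> x"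
          unfolding ptw1[OF s] by (intro mult_right_mono) auto
        then show ?case using c by (simp add: ennreal_mult'[symmetric] ennreal_leI)
      qed
      fix i
      show "AE x in lebesgue_on \<Omega>. ennreal (\<bar>(\<bar>u x\<bar> powr (\<gamma> x / \<beta> x) * Du i x) / s powr (\<gamma> x / \<beta> x + 1)\<bar> powr \<beta> x)
        \<le> ennreal c * ennreal (\<bar>u x\<bar> powr \<gamma> x * \<bar>Du i x\<bar> powr \<beta> x)"
        using AEx
      proof eventually_elim
        case (elim x)
        then have "s powr (- (\<gamma> x + \<beta> x)) \<le> c" unfolding c_def using s powr_between(2) by blast
        then have "\<bar>(\<bar>u x\<bar> powr (\<gamma> x / \<beta> x) * Du i x) / s powr (\<gamma> x / \<beta> x + 1)\<bar> powr \<beta> x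
           \<le> c * (\<bar>u x\<bar> powr \<gamma> x * \<bar>Du i x\<bar> powr \<beta> x)"
          unfolding ptw2[OF s conjunct1[OF elim]] by (intro mult_right_mono) auto
        then show ?case using c by (simp add: ennreal_mult'[symmetric] ennreal_leI)
      qed
    qed
    also have "\<dots> = ennreal c * R"
      unfolding Rdef using c by (simp add: distrib_left sum_distrib_left nn_cmult_eq)
    finally show ?thesis unfolding c_def .
  qed
  obtain r where r: "R = ennreal r" "r \<ge> 0" using Rfin by (cases R) auto
  have a0: "a > 0" using a2 by simp
  have b0: "b > 0" using a0 ab by simp
  have inS: "r \<le> max (s powr a) (s powr b)" if "s \<in> S" for s
  proof -
    have s: "s > 0" "F s \<le> 1" using that unfolding S_def by auto
    have m: "ennreal (1 / max (s powr a) (s powr b) * r) = ennreal (1 / max (s powr a) (s powr b)) * ennreal r"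
      using s(1) r(2) by (intro ennreal_mult) (auto simp: max_def)
    have "ennreal (1 / max (s powr a) (s powr b) * r) \<le> 1"
      unfolding m using L[OF s(1)] s(2) r(1) by simp
    then have "1 / max (s powr a) (s powr b) * r \<le> 1" by (simp add: ennreal_le_1)
    then show ?thesis using s(1) by (simp add: field_simps max_def split: if_splits)
  qed
  have notS: "min (s powr a) (s powr b) < r" if "s > 0" "s \<notin> S" for s
  proof -
    have "F s > 1" using that unfolding S_def by auto
    have m: "ennreal (1 / min (s powr a) (s powr b) * r) = ennreal (1 / min (s powr a) (s powr b)) * ennreal r"
      using that(1) r(2) by (intro ennreal_mult) (auto simp: min_def)
    have "1 < ennreal (1 / min (s powr a) (s powr b) * r)"
      unfolding m using U[OF that(1)] \<open>F s > 1\<close> r(1) by simp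
    then have "1 < 1 / min (s powr a) (s powr b) * r"
      by (metis ennreal_le_1 not_le)
    then show ?thesis using that(1) by (simp add: field_simps min_def split: if_splits)
  qed
  have Sne: "max 1 r \<in> S"
  proof -
    have "max 1 r \<notin> S \<Longrightarrow> False"
    proof -
      assume "max 1 r \<notin> S"
      then have "min (max 1 r powr a) (max 1 r powr b) < r" using notS by auto
      moreover have "max 1 r powr a \<ge> max 1 r powr 1"
        using a2 by (intro powr_mono) auto
      moreover have "max 1 r powr b \<ge> max 1 r powr 1"
        using a2 ab by (intro powr_mono) auto
      ultimately show False by auto
    qed
    then show ?thesis by blast
  qed
  have bdd: "bdd_below S" unfolding S_def by (rule bdd_belowI[of _ 0]) auto
  have lam0: "lam \<ge> 0" unfolding lam using Sne by (intro cInf_greatest) (auto simp: S_def)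
  have up: "r \<le> max (lam powr a) (lam powr b)"
  proof (rule ccontr)
    assume "\<not> ?thesis"
    then have rl: "lam powr a < r" "lam powr b < r" by auto
    have "lam < r powr (1/a)"
    proof (rule ccontr)
      assume "\<not> ?thesis"
      then have "(r powr (1/a)) powr a \<le> lam powr a" using a0 r(2) by (intro powr_mono2) auto
      then show False using rl a0 r(2) by (simp add: powr_powr)
    qed
    moreover have "lam < r powr (1/b)"
    proof (rule ccontr)
      assume "\<not> ?thesis"
      then have "(r powr (1/b)) powr b \<le> lam powr b" using b0 r(2) by (intro powr_mono2) auto
      then show False using rl b0 r(2) by (simp add: powr_powr)
    qed
    ultimately obtain t where t: "lam < t" "t < r powr (1/a)" "t < r powr (1/b)"
      by (metis min_less_iff_conj dense)
    then obtain s' where s': "s' \<in> S" "s' < t" using Sne bdd cInf_less_iff[of S t] unfolding lam by auto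
    have s'0: "s' > 0" using s' unfolding S_def by auto
    have "s' powr a < (r powr (1/a)) powr a" using s' t s'0 a0 by (intro powr_less_mono2) auto
    moreover have "s' powr b < (r powr (1/b)) powr b" using s' t s'0 b0 by (intro powr_less_mono2) auto
    ultimately show False using inS[OF s'(1)] a0 b0 r(2) by (simp add: powr_powr)
  qed
  have low: "min (lam powr a) (lam powr b) \<le> r"
  proof (cases "lam = 0")
    case True then show ?thesis using r by simp
  next
    case False
    then have lp: "lam > 0" using lam0 by simp
    show ?thesis
    proof (rule ccontr)
      assume "\<not> ?thesis"
      then have rl: "r < lam powr a" "r < lam powr b" by auto
      have "r powr (1/a) < lam"
      proof (rule ccontr)
        assume "\<not> ?thesis"
        then have "lam powr a \<le> (r powr (1/a)) powr a" using a0 lp by (intro powr_mono2) auto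
        then show False using rl a0 r(2) by (simp add: powr_powr)
      qed
      moreover have "r powr (1/b) < lam"
      proof (rule ccontr)
        assume "\<not> ?thesis"
        then have "lam powr b \<le> (r powr (1/b)) powr b" using b0 lp by (intro powr_mono2) auto
        then show False using rl b0 r(2) by (simp add: powr_powr)
      qed
      ultimately obtain t where t: "t < lam" "r powr (1/a) < t" "r powr (1/b) < t" "0 < t"
        using lp by (metis max_less_iff_conj dense)
      have "t \<notin> S"
      proof
        assume "t \<in> S"
        then have "lam \<le> t" unfolding lam using bdd by (intro cInf_lower)
        then show False using t by simp
      qed
      then have "min (t powr a) (t powr b) < r" using notS t by auto
      moreover have "(r powr (1/a)) powr a < t powr a" using t a0 by (intro powr_less_mono2) auto
      moreover have "(r powr (1/b)) powr b < t powr b" using t b0 by (intro powr_less_mono2) auto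
      ultimately show False using a0 b0 r(2) by (simp add: powr_powr)
    qed
  qed
  show ?thesis
    unfolding R_def[symmetric] lam_def[symmetric] a_def[symmetric] b_def[symmetric]
    using up low r by (auto intro: ennreal_leI)
qed

end
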